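(* With the notation of the context, suppose there are two sample points $\bm x_\alpha,\bm x_\beta$ such that $$\max_{j\in J_{\leq,\alpha}}u_j(\bm x_\beta)<u^*(\bm x_\beta)=u_\beta(\bm x_\beta).$$ Then there exists a point $\bm x_\gamma\in\mathcal{L}(\bm x_\alpha,\bm x_\beta)=\{\lambda\bm x_\alpha+(1-\lambda)\bm x_\beta:\lambda\in(0,1)\}$ and an affine local piece $u_\gamma$ of $u^*$ with $u^*(\bm x_\gamma)=u_\gamma(\bm x_\gamma)$ such that $$u_\gamma(\bm x_\alpha)\le u_\alpha(\bm x_\alpha),\qquad u_\gamma(\bm x_\beta)\ge u_\beta(\bm x_\beta).$$ Moreover, after adding $(\bm x_\gamma,u_\gamma)$ to the sample set (and recomputing $J_{\leq,\alpha}$ accordingly), $\max_{j\in J_{\leq,\alpha}}u_j(\bm x_\beta)\ge u_\beta(\bm x_\beta)$.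
   Context: Let $\Omega\subseteq\mathbb{R}^{n_x}$ be a convex polyhedron and $u^*:\Omega\to\mathbb{R}$ a continuous piecewise affine (PWA) function: $\Omega$ is the union of finitely many closed convex polyhedra (local regions) with pairwise disjoint interiors, and on each local region $u^*$ coincides with an affine function (its local piece). Sample points $\bm x_1,\dots,\bm x_{N_s}\in\Omega$ are given, each lying in the interior of a unique order (UO) region $\Gamma(\bm x_i)$ (a closed polyhedron inside a local region on whose interior the order of all distinct local pieces of $u^*$ is constant), and $u_i$ denotes the local piece of $u^*$ on $\Gamma(\bm x_i)$, so $u_i(\bm x_i)=u^*(\bm x_i)$. Define $J_{\leq,i}=\{j: u_j(\bm x_i)\le u_i(\bm x_i)\}$, where $j$ ranges over the indices of all current sample points. *)

theory Defs
  imports "HOL-Analysis.Analysis"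
begin

definition affine_fun :: "('a::euclidean_space \<Rightarrow> real) \<Rightarrow> bool" where
  "affine_fun f \<longleftrightarrow> (\<exists>a b. \<forall>x. f x = inner a x + b)"

definition pwa_on ::
  "'a::euclidean_space set \<Rightarrow> ('a \<Rightarrow> real) \<Rightarrow> nat \<Rightarrow> (nat \<Rightarrow> 'a set) \<Rightarrow> (nat \<Rightarrow> 'a \<Rightarrow> real) \<Rightarrow> bool"
  where
  "pwa_on \<Omega> u K Rg pc \<longleftrightarrow>
     continuous_on \<Omega> u \<and>
     (\<Union>i<K. Rg i) = \<Omega> \<and>
     (\<forall>i<K. polyhedron (Rg i) \<and> closed (Rg i) \<and> convex (Rg i)) \<and>
     (\<forall>i<K. \<forall>j<K. i \<noteq> j \<longrightarrow> interior (Rg i) \<inter> interior (Rg j) = {}) \<and>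
     (\<forall>i<K. affine_fun (pc i) \<and> (\<forall>x\<in>Rg i. u x = pc i x))"

definition uo_region ::
  "nat \<Rightarrow> (nat \<Rightarrow> 'a::euclidean_space set) \<Rightarrow> (nat \<Rightarrow> 'a \<Rightarrow> real) \<Rightarrow> 'a set \<Rightarrow> bool" where
  "uo_region K Rg pc G \<longleftrightarrow>
     polyhedron G \<and> closed G \<and> (\<exists>k<K. G \<subseteq> Rg k) \<and>
     (\<forall>p<K. \<forall>q<K. \<forall>x\<in>interior G. \<forall>y\<in>interior G.
        sgn (pc p x - pc q x) = sgn (pc p y - pc q y))"

definition J_le :: "nat \<Rightarrow> (nat \<Rightarrow> 'a) \<Rightarrow> (nat \<Rightarrow> 'a \<Rightarrow> real) \<Rightarrow> nat \<Rightarrow> nat set" where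
  "J_le N xs us i = {j. j < N \<and> us j (xs i) \<le> us i (xs i)}"

end

theory Submission
  imports Defs
begin

lemma affine_fun_comb:
  assumes "affine_fun f"
  shows "f (t *\<^sub>R x + (1 - t) *\<^sub>R y) = t * f x + (1 - t) * f y"
proof -
  obtain a b where ab: "\<And>x. f x = inner a x + b" using assms unfolding affine_fun_def by blast
  show ?thesis unfolding ab by (simp add: inner_add_right algebra_simps)
qed

theorem mainTheorem3:
  fixes \<Omega> :: "'a::euclidean_space set" and u :: "'a \<Rightarrow> real"
    and K :: nat and Rg :: "nat \<Rightarrow> 'a set" and pc :: "nat \<Rightarrow> 'a \<Rightarrow> real"
    and N :: nat and xs :: "nat \<Rightarrow> 'a" and \<Gamma> :: "nat \<Rightarrow> 'a set"
    and us :: "nat \<Rightarrow> 'a \<Rightarrow> real" and \<alpha> \<beta> :: nat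
  assumes "convex \<Omega>" and "polyhedron \<Omega>"
    and "pwa_on \<Omega> u K Rg pc"
    and "\<And>i. i < N \<Longrightarrow> uo_region K Rg pc (\<Gamma> i) \<and> xs i \<in> interior (\<Gamma> i) \<and>
              (\<exists>k<K. \<Gamma> i \<subseteq> Rg k \<and> us i = pc k)"
    and "\<alpha> < N" and "\<beta> < N"
    and "Max ((\<lambda>j. us j (xs \<beta>)) ` J_le N xs us \<alpha>) < u (xs \<beta>)"
    and "u (xs \<beta>) = us \<beta> (xs \<beta>)"
  shows "\<exists>xg ug. (\<exists>t::real. 0 < t \<and> t < 1 \<and> xg = t *\<^sub>R xs \<alpha> + (1 - t) *\<^sub>R xs \<beta>) \<and>
           (\<exists>k<K. ug = pc k) \<and> u xg = ug xg \<and>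
           ug (xs \<alpha>) \<le> us \<alpha> (xs \<alpha>) \<and> ug (xs \<beta>) \<ge> us \<beta> (xs \<beta>) \<and>
           Max ((\<lambda>j. (us(N := ug)) j ((xs(N := xg)) \<beta>))
                  ` J_le (Suc N) (xs(N := xg)) (us(N := ug)) \<alpha>)
             \<ge> us \<beta> (xs \<beta>)"
proof -
  note pwa = assms(3)[unfolded pwa_on_def]
  have contu: "continuous_on \<Omega> u" using pwa by blast
  have cover: "(\<Union>i<K. Rg i) = \<Omega>" using pwa by blast
  have closedR: "\<And>i. i < K \<Longrightarrow> closed (Rg i)" using pwa by blast
  have pcaff: "\<And>i. i < K \<Longrightarrow> affine_fun (pc i)" using pwa by blast
  have pcu: "\<And>i x. i < K \<Longrightarrow> x \<in> Rg i \<Longrightarrow> u x = pc i x" using pwa by blast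
  define xa where "xa = xs \<alpha>"
  define xb where "xb = xs \<beta>"
  have samp: "\<And>i. i < N \<Longrightarrow> xs i \<in> \<Omega> \<and> us i (xs i) = u (xs i)"
  proof -
    fix i assume i: "i < N"
    then obtain k where k: "k < K" "\<Gamma> i \<subseteq> Rg k" "us i = pc k" and xi: "xs i \<in> interior (\<Gamma> i)"
      using assms(4) by blast
    have "xs i \<in> Rg k" using xi k interior_subset by blast
    then show "xs i \<in> \<Omega> \<and> us i (xs i) = u (xs i)" using k cover pcu by auto
  qed
  have xaO: "xa \<in> \<Omega>" and xbO: "xb \<in> \<Omega>" using samp assms(5,6) xa_def xb_def by auto
  have ua: "us \<alpha> xa = u xa" using samp assms(5) xa_def by auto
  have finJ: "\<And>M xx uu i. finite (J_le M xx uu i)" unfolding J_le_def by auto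
  have aJ: "\<alpha> \<in> J_le N xs us \<alpha>" unfolding J_le_def using assms(5) by auto
  have uab: "us \<alpha> xb < u xb"
  proof -
    have "us \<alpha> xb \<le> Max ((\<lambda>j. us j (xs \<beta>)) ` J_le N xs us \<alpha>)"
      using finJ aJ xb_def by (intro Max_ge finite_imageI) auto
    then show ?thesis using assms(7) xb_def by simp
  qed
  define p where "p t = t *\<^sub>R xa + (1 - t) *\<^sub>R xb" for t :: real
  define d where "d t = u (p t) - (t * u xa + (1 - t) * u xb)" for t
  have pO: "\<And>t. 0 \<le> t \<Longrightarrow> t \<le> 1 \<Longrightarrow> p t \<in> \<Omega>"
    unfolding p_def using assms(1) xaO xbO by (intro convexD) auto
  have contp: "continuous_on UNIV p" unfolding p_def by (intro continuous_intros)
  have contd: "continuous_on {0..1} d"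
  proof -
    have "continuous_on {0..1} (\<lambda>t. u (p t))"
      by (rule continuous_on_compose2[OF contu continuous_on_subset[OF contp]]) (use pO in auto)
    then show ?thesis unfolding d_def by (intro continuous_intros)
  qed
  obtain ka where ka: "ka < K" "\<Gamma> \<alpha> \<subseteq> Rg ka" "us \<alpha> = pc ka" and xai: "xa \<in> interior (\<Gamma> \<alpha>)"
    using assms(4)[OF assms(5)] xa_def by blast
  obtain r where r: "r > 0" "ball xa r \<subseteq> \<Gamma> \<alpha>"
    using xai by (meson interior_subset open_contains_ball open_interior subset_trans interior_subset)
  define \<epsilon> where "\<epsilon> = min (1/2) (r / (2 * (norm (xa - xb) + 1)))"
  have eps: "0 < \<epsilon>" "\<epsilon> \<le> 1/2"
  proof -
    have "0 < r / (2 * (norm (xa - xb) + 1))" using r by (intro divide_pos_pos) (auto intro: add_nonneg_pos)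
    then show "0 < \<epsilon>" "\<epsilon> \<le> 1/2" unfolding \<epsilon>_def by (simp, linarith)
  qed
  have dneg: "d t < 0" if "1 - \<epsilon> \<le> t" "t < 1" for t
  proof -
    have "dist xa (p t) = (1 - t) * norm (xa - xb)"
    proof -
      have "xa - p t = (1 - t) *\<^sub>R (xa - xb)" unfolding p_def by (simp add: algebra_simps)
      then show ?thesis using that by (simp add: dist_norm)
    qed
    also have "\<dots> \<le> \<epsilon> * norm (xa - xb)" using that by (intro mult_right_mono) auto
    also have "\<dots> \<le> r / (2 * (norm (xa - xb) + 1)) * norm (xa - xb)"
      unfolding \<epsilon>_def by (intro mult_right_mono) auto
    also have "\<dots> < r"
    proof -
      have "r / (2 * (norm (xa - xb) + 1)) * norm (xa - xb) = r * (norm (xa - xb) / (2 * (norm (xa - xb) + 1)))"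
        by simp
      also have "\<dots> < r * 1"
        using r by (intro mult_strict_left_mono) (auto simp: divide_simps, smt (verit) norm_ge_zero)
      finally show ?thesis by simp
    qed
    finally have "p t \<in> Rg ka" using r ka by auto
    then have "u (p t) = pc ka (p t)" using pcu ka by auto
    also have "\<dots> = t * us \<alpha> xa + (1 - t) * us \<alpha> xb"
      unfolding p_def ka(3) by (rule affine_fun_comb[OF pcaff[OF ka(1)]])
    finally have "d t = (1 - t) * (us \<alpha> xb - u xb)" unfolding d_def using ua by (simp add: algebra_simps)
    moreover have "(1 - t) * (us \<alpha> xb - u xb) < 0" using that uab by (intro mult_pos_neg) auto
    ultimately show ?thesis by simp
  qed
  define T where "T = {0..1 - \<epsilon>} \<inter> d -` {0..}"
  have "closed T"
  proof -
    have "closed ({0..1} \<inter> d -` {0..})"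
      by (rule continuous_closed_preimage[OF contd]) auto
    moreover have "T = {0..1 - \<epsilon>} \<inter> ({0..1} \<inter> d -` {0..})" unfolding T_def using eps by auto
    ultimately show ?thesis by auto
  qed
  moreover have "bounded T" unfolding T_def by (rule bounded_Int) auto
  ultimately have "compact T" by (simp add: compact_eq_bounded_closed)
  moreover have "0 \<in> T" unfolding T_def d_def p_def using eps by auto
  ultimately obtain t1 where t1: "t1 \<in> T" "\<And>t. t \<in> T \<Longrightarrow> t \<le> t1"
    using compact_attains_sup by (metis empty_iff)
  have t1b: "0 \<le> t1" "t1 < 1 - \<epsilon>" "d t1 \<ge> 0"
  proof -
    show "0 \<le> t1" "d t1 \<ge> 0" using t1 unfolding T_def by auto
    have "t1 \<le> 1 - \<epsilon>" using t1 unfolding T_def by auto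
    moreover have "d (1 - \<epsilon>) < 0" using dneg eps by auto
    moreover have "d t1 \<ge> 0" using t1 unfolding T_def by auto
    ultimately show "t1 < 1 - \<epsilon>" by (metis order.not_eq_order_implies_strict not_le)
  qed
  have dneg2: "d t < 0" if "t1 < t" "t < 1" for t
  proof (cases "t < 1 - \<epsilon>")
    case True
    then have "t \<notin> T" using t1(2) that by force
    then show ?thesis unfolding T_def using True that t1b by auto
  next
    case False then show ?thesis using dneg that by auto
  qed
  define C where "C k = {0..1} \<inter> p -` Rg k" for k
  have closedC: "\<And>k. k < K \<Longrightarrow> closed (C k)"
    unfolding C_def by (intro continuous_closed_preimage continuous_on_subset[OF contp] closedR) auto
  define Cl where "Cl = (\<Union>k\<in>{k. k < K \<and> t1 \<notin> C k}. C k)"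
  have "closed Cl" unfolding Cl_def using closedC by (intro closed_UN) auto
  moreover have "t1 \<notin> Cl" unfolding Cl_def by auto
  ultimately obtain \<delta> where \<delta>: "\<delta> > 0" "ball t1 \<delta> \<subseteq> - Cl"
    by (metis ComplI open_Compl open_contains_ball)
  define t' where "t' = min (t1 + \<delta>/2) ((t1 + 1)/2)"
  have t': "t1 < t'" "t' < 1" "t' \<in> ball t1 \<delta>" using \<delta> t1b eps unfolding t'_def by (auto simp: dist_real_def abs_if min_def)
  have "p t' \<in> \<Omega>" using t' t1b by (intro pO) auto
  then obtain k where k: "k < K" "p t' \<in> Rg k" using cover by auto
  have "t' \<in> C k" unfolding C_def using k t' t1b by auto
  then have "t1 \<in> C k" using t' \<delta> k unfolding Cl_def by blast
  then have pt1: "p t1 \<in> Rg k" unfolding C_def by auto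
  define A where "A = pc k xa - u xa"
  define B where "B = pc k xb - u xb"
  have Dform: "\<And>t. p t \<in> Rg k \<Longrightarrow> d t = t * A + (1 - t) * B"
  proof -
    fix t assume "p t \<in> Rg k"
    then have "u (p t) = pc k (p t)" using pcu k by auto
    also have "\<dots> = t * pc k xa + (1 - t) * pc k xb"
      unfolding p_def by (rule affine_fun_comb[OF pcaff[OF k(1)]])
    finally show "d t = t * A + (1 - t) * B" unfolding d_def A_def B_def by (simp add: algebra_simps)
  qed
  have h1: "t1 * A + (1 - t1) * B \<ge> 0" using Dform[OF pt1] t1b by simp
  have h2: "t' * A + (1 - t') * B < 0" using Dform[OF k(2)] dneg2[OF t'(1,2)] by simp
  have AB: "A < B"
  proof -
    have "(t' - t1) * (A - B) < 0" using h1 h2 by (simp add: algebra_simps)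
    then show ?thesis using t' by (simp add: mult_less_0_iff)
  qed
  have Aneg: "A \<le> 0"
  proof -
    have "A = t' * A + (1 - t') * B + (1 - t') * (A - B)" by (simp add: algebra_simps)
    moreover have "(1 - t') * (A - B) \<le> 0" using t' AB by (intro mult_nonneg_nonpos) auto
    ultimately show ?thesis using h2 by linarith
  qed
  have Bpos: "B \<ge> 0"
  proof -
    have "B = t1 * A + (1 - t1) * B - t1 * (A - B)" by (simp add: algebra_simps)
    moreover have "t1 * (A - B) \<le> 0" using t1b AB by (intro mult_nonneg_nonpos) auto
    ultimately show ?thesis using h1 by linarith
  qed
  define xg where "xg = p t'"
  define ug where "ug = pc k"
  have c1: "pc k xa \<le> us \<alpha> xa" using Aneg ua A_def by simp
  have c2: "pc k xb \<ge> us \<beta> xb" using Bpos assms(8) B_def xb_def by simp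
  have ug_u: "u xg = ug xg" unfolding xg_def ug_def using pcu k by auto
  have last: "Max ((\<lambda>j. (us(N := ug)) j ((xs(N := xg)) \<beta>))
                  ` J_le (Suc N) (xs(N := xg)) (us(N := ug)) \<alpha>) \<ge> us \<beta> (xs \<beta>)"
  proof -
    have NJ: "N \<in> J_le (Suc N) (xs(N := xg)) (us(N := ug)) \<alpha>"
      unfolding J_le_def using assms(5) c1 xa_def ug_def by auto
    have "(us(N := ug)) N ((xs(N := xg)) \<beta>) \<le> Max ((\<lambda>j. (us(N := ug)) j ((xs(N := xg)) \<beta>))
                  ` J_le (Suc N) (xs(N := xg)) (us(N := ug)) \<alpha>)"
      using NJ finJ by (intro Max_ge finite_imageI) auto
    moreover have "(us(N := ug)) N ((xs(N := xg)) \<beta>) = pc k xb"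
      using assms(6) xb_def ug_def by auto
    ultimately show ?thesis using c2 xb_def by simp
  qed
  show ?thesis
    apply (rule exI[of _ xg], rule exI[of _ ug])
    using t' t1b k ug_u c1 c2 last unfolding xg_def ug_def p_def xa_def xb_def
    by (auto intro!: exI[of _ t'])
qed

end
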